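(* Let $\rho_0,\rho$ be Lévy measures on $(0,+\infty)$, $P_0$ an atomless probability on $\mathbb X$, and $\tilde{\boldsymbol\mu}\sim\mathrm{hCRV}(\rho,\rho_0,P_0)$. Then each marginal $\tilde\mu_i$ is infinitely active (i.e. the marginal Lévy measure $\rho_1(\cdot)=\int_0^{+\infty}P_{\mathrm{ID}(t\rho)}(\cdot)\,\mathrm d\rho_0(t)$ of $\tilde\mu_i$, restricted to $(0,+\infty)$, has infinite total mass) if and only if $$\int_0^{+\infty}\mathrm d\rho_0(t)=\int_0^{+\infty}\mathrm d\rho(t)=+\infty.$$
   Context: Let $\mathbb X$ be a Polish space. A Lévy measure on $(0,+\infty)$ is a σ-finite measure $\rho$ with $\rho((\epsilon,+\infty))<\infty$ and $\int_{(0,\epsilon)}s\,\mathrm d\rho(s)<\infty$ for all $\epsilon>0$; its Laplace exponent is $\psi(\lambda)=\int_0^{+\infty}(1-e^{-\lambda s})\,\mathrm d\rho(s)$. $\mathrm{ID}(\rho)$ is the infinitely divisible distribution on $[0,+\infty)$ with Laplace transform $e^{-\psi(\lambda)}$, with law $P_{\mathrm{ID}(\rho)}$. For a finite (possibly random) measure $m$ on $\mathbb X$, $\tilde\mu\sim\mathrm{CRM}(\rho\otimes m)$ means that (conditionally on $m$) evaluations on pairwise disjoint Borel sets are independent and $E[e^{-\lambda\tilde\mu(A)}]=e^{-m(A)\psi(\lambda)}$. $\tilde{\boldsymbol\mu}=(\tilde\mu_1,\dots,\tilde\mu_d)\sim\mathrm{hCRV}(\rho,\rho_0,P_0)$ means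 $\tilde\mu_0\sim\mathrm{CRM}(\rho_0\otimes P_0)$ and, conditionally on $\tilde\mu_0$, the $\tilde\mu_i$ are independent with $\tilde\mu_i\sim\mathrm{CRM}(\rho\otimes\tilde\mu_0)$. Each $\tilde\mu_i$ is then a completely random measure with Lévy intensity $\rho_1\otimes P_0$, $\rho_1$ as in the claim. A CRM is infinitely active if its Lévy measure on $(0,\infty)$ has infinite mass. *)

theory Defs
  imports "HOL-Probability.Probability"
begin

text \<open>A Levy measure on (0,+inf), represented as a sigma-finite Borel measure on the
reals giving no mass to (-inf,0].\<close>
definition levy_measure :: "real measure \<Rightarrow> bool" where
  "levy_measure \<rho> \<longleftrightarrow> sets \<rho> = sets borel \<and> sigma_finite_measure \<rho> \<and>
     emeasure \<rho> {..0} = 0 \<and>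
     (\<forall>\<epsilon>>0. emeasure \<rho> {\<epsilon><..} < \<infinity> \<and>
              (\<integral>\<^sup>+ s. ennreal s * indicator {0<..<\<epsilon>} s \<partial>\<rho>) < \<infinity>)"

definition laplace_exponent :: "real measure \<Rightarrow> real \<Rightarrow> real" where
  "laplace_exponent \<rho> lam = enn2real (\<integral>\<^sup>+ s. ennreal (1 - exp (- lam * s)) * indicator {0<..} s \<partial>\<rho>)"

text \<open>Q is (the law of) ID(rho): a probability on [0,+inf) with Laplace transform
exp(-psi). (Such a law exists and is unique by uniqueness of Laplace transforms.)\<close>
definition is_ID_law :: "real measure \<Rightarrow> real measure \<Rightarrow> bool" where
  "is_ID_law \<rho> Q \<longleftrightarrow> prob_space Q \<and> sets Q = sets borel \<and> emeasure Q {..<0} = 0 \<and>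
     (\<forall>lam\<ge>0. (\<integral>\<^sup>+ x. ennreal (exp (- lam * x)) \<partial>Q) = ennreal (exp (- laplace_exponent \<rho> lam)))"

definition scale_measure_real :: "real \<Rightarrow> real measure \<Rightarrow> real measure" where
  "scale_measure_real t \<rho> = scale_measure (ennreal t) \<rho>"

text \<open>Marginal Levy measure rho_1(A) = integral of P_{ID(t rho)}(A) d rho_0(t), where
Q t is the law P_{ID(t rho)}.\<close>
definition marginal_levy :: "real measure \<Rightarrow> (real \<Rightarrow> real measure) \<Rightarrow> real set \<Rightarrow> ennreal" where
  "marginal_levy \<rho>0 Q A = (\<integral>\<^sup>+ t. emeasure (Q t) A * indicator {0<..} t \<partial>\<rho>0)"

end

theory Submission
  imports Defs "HOL-Real_Asymp.Real_Asymp"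
begin

lemma levy_meas:
  assumes "levy_measure \<rho>"
  shows "borel_measurable \<rho> = borel_measurable borel" "space \<rho> = UNIV" "sets \<rho> = sets borel"
  using assms unfolding levy_measure_def
  by (auto intro: measurable_cong_sets dest: sets_eq_imp_space_eq)

lemma min_bound:
  fixes s l :: real
  assumes "s > 0" "l \<ge> 0"
  shows "ennreal (1 - exp (- l * s)) \<le> ennreal l * (ennreal s * indicator {0<..<2} s) + indicator {1<..} s"
proof (cases "s < 2")
  case True
  have "1 - exp (- l * s) \<le> l * s" using exp_ge_add_one_self[of "- l * s"] by simp
  then show ?thesis using True assms by (simp add: ennreal_mult[symmetric] ennreal_leI add_increasing2)
next
  case False
  then have "ennreal (1 - exp (- l * s)) \<le> 1" by (simp add: ennreal_le_1)
  moreover have "indicator {1<..} s = (1::ennreal)" using False by simp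
  ultimately show ?thesis using False by (metis add_increasing zero_le)
qed

lemma psi_finite:
  assumes L: "levy_measure \<rho>" and l: "l \<ge> 0"
  shows "(\<integral>\<^sup>+ s. ennreal (1 - exp (- l * s)) * indicator {0<..} s \<partial>\<rho>) < \<infinity>"
proof -
  note M = levy_meas[OF L]
  have "(\<integral>\<^sup>+ s. ennreal (1 - exp (- l * s)) * indicator {0<..} s \<partial>\<rho>)
     \<le> (\<integral>\<^sup>+ s. ennreal l * (ennreal s * indicator {0<..<2} s) + indicator {1<..} s \<partial>\<rho>)"
    apply (rule nn_integral_mono)
    subgoal for s using min_bound[OF _ l, of s] by (cases "s > 0") auto
    done
  also have "\<dots> = ennreal l * (\<integral>\<^sup>+ s. ennreal s * indicator {0<..<2} s \<partial>\<rho>) + emeasure \<rho> {1<..}"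
    by (subst nn_integral_add) (auto simp: M nn_integral_cmult)
  also have "\<dots> < \<infinity>"
  proof -
    have a: "(\<integral>\<^sup>+ s. ennreal s * indicator {0<..<2} s \<partial>\<rho>) < \<infinity>" and b: "emeasure \<rho> {1<..} < \<infinity>"
      using L unfolding levy_measure_def by auto
    show ?thesis using a b by (simp add: ennreal_mult_less_top)
  qed
  finally show ?thesis .
qed

definition Ipsi :: "real measure \<Rightarrow> real \<Rightarrow> ennreal" where
  "Ipsi \<rho> l = (\<integral>\<^sup>+ s. ennreal (1 - exp (- l * s)) * indicator {0<..} s \<partial>\<rho>)"

lemma lap_scale:
  assumes L: "levy_measure \<rho>" and t: "t \<ge> 0"
  shows "laplace_exponent (scale_measure_real t \<rho>) l = t * enn2real (Ipsi \<rho> l)"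
proof -
  note M = levy_meas[OF L]
  show ?thesis unfolding laplace_exponent_def scale_measure_real_def Ipsi_def
    by (subst nn_integral_scale_measure) (auto simp: M enn2real_mult t)
qed

lemma Ipsi_le: assumes L: "levy_measure \<rho>" shows "Ipsi \<rho> l \<le> emeasure \<rho> {0<..}"
proof -
  have "Ipsi \<rho> l \<le> (\<integral>\<^sup>+ s. indicator {0<..} s \<partial>\<rho>)"
    unfolding Ipsi_def by (rule nn_integral_mono) (auto simp: indicator_def ennreal_le_1)
  also have "\<dots> \<le> emeasure \<rho> {0<..}"
    using levy_meas[OF L] by (simp add: nn_integral_indicator)
  finally show ?thesis .
qed

lemma Ipsi_SUP:
  assumes L: "levy_measure \<rho>"
  shows "(SUP n::nat. Ipsi \<rho> (real n)) = emeasure \<rho> {0<..}"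
proof -
  note M = levy_meas[OF L]
  define f where "f n s = ennreal (1 - exp (- real n * s)) * indicator {0<..} s" for n :: nat and s
  have inc: "incseq f"
    unfolding f_def by (auto simp: incseq_def le_fun_def indicator_def intro!: ennreal_leI mult_right_mono)
  have pt: "(SUP n. f n s) = indicator {0<..} s" for s
  proof (cases "s > 0")
    case True
    have "(\<lambda>n. 1 - exp (- real n * s)) \<longlonglongrightarrow> 1" using True by real_asymp
    then have "(\<lambda>n. f n s) \<longlonglongrightarrow> 1" unfolding f_def using True
      by (auto intro!: tendsto_ennrealI[where x=1, simplified])
    moreover have "(\<lambda>n. f n s) \<longlonglongrightarrow> (SUP n. f n s)"
      using inc by (intro LIMSEQ_SUP) (auto simp: incseq_def le_fun_def)
    ultimately show ?thesis using True LIMSEQ_unique by fastforce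
  next
    case False then show ?thesis by (simp add: f_def)
  qed
  have "(SUP n::nat. Ipsi \<rho> (real n)) = (\<integral>\<^sup>+ s. (SUP n. f n s) \<partial>\<rho>)"
    unfolding Ipsi_def f_def[symmetric]
    by (rule nn_integral_monotone_convergence_SUP[symmetric]) (use inc[unfolded f_def] in \<open>auto simp: M f_def\<close>)
  also have "\<dots> = emeasure \<rho> {0<..}"
    by (simp add: pt M)
  finally show ?thesis .
qed

lemma Q_lap:
  assumes L: "levy_measure \<rho>" and t: "t > 0" and Q: "is_ID_law (scale_measure_real t \<rho>) Q"
    and l: "l \<ge> 0"
  shows "(\<integral>\<^sup>+ x. ennreal (exp (- l * x)) \<partial>Q) = ennreal (exp (- t * enn2real (Ipsi \<rho> l)))"
  using Q l lap_scale[OF L, of t l] t unfolding is_ID_law_def by auto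

lemma Q0_le:
  assumes Q: "is_ID_law R Q"
  shows "emeasure Q {0} \<le> (\<integral>\<^sup>+ x. ennreal (exp (- l * x)) \<partial>Q)"
proof -
  have "emeasure Q {0} = (\<integral>\<^sup>+ x. indicator {0} x \<partial>Q)"
    using Q unfolding is_ID_law_def by (simp add: nn_integral_indicator)
  also have "\<dots> \<le> (\<integral>\<^sup>+ x. ennreal (exp (- l * x)) \<partial>Q)"
    by (rule nn_integral_mono) (auto simp: indicator_def)
  finally show ?thesis .
qed

lemma Q0_zero:
  assumes L: "levy_measure \<rho>" and t: "t > 0" and Q: "is_ID_law (scale_measure_real t \<rho>) Q"
    and inf: "emeasure \<rho> {0<..} = \<infinity>"
  shows "emeasure Q {0} = 0"
proof -
  have bnd: "emeasure Q {0} \<le> ennreal (exp (- t * B))" if B: "B \<ge> 0" for B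
  proof -
    have "ennreal B < (SUP n::nat. Ipsi \<rho> (real n))" unfolding Ipsi_SUP[OF L] inf by simp
    then obtain n where n: "ennreal B < Ipsi \<rho> (real n)" by (auto simp: less_SUP_iff)
    have fin: "Ipsi \<rho> (real n) < \<infinity>" using psi_finite[OF L, of "real n"] by (simp add: Ipsi_def)
    have "B \<le> enn2real (Ipsi \<rho> (real n))"
      using enn2real_mono[of "ennreal B" "Ipsi \<rho> (real n)"] n fin B by simp
    then have "exp (- t * enn2real (Ipsi \<rho> (real n))) \<le> exp (- t * B)" using t by simp
    then have "ennreal (exp (- t * enn2real (Ipsi \<rho> (real n)))) \<le> ennreal (exp (- t * B))"
      by (rule ennreal_leI)
    moreover have "emeasure Q {0} \<le> ennreal (exp (- t * enn2real (Ipsi \<rho> (real n))))"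
      using Q0_le[OF Q, of "real n"] Q_lap[OF L t Q, of "real n"] by simp
    ultimately show ?thesis by (rule order_trans[rotated])
  qed
  have lim: "((\<lambda>B. ennreal (exp (- t * B))) \<longlongrightarrow> ennreal 0) at_top"
  proof (rule tendsto_ennrealI)
    show "((\<lambda>B. exp (- t * B)) \<longlongrightarrow> 0) at_top" using t by real_asymp
  qed
  have "emeasure Q {0} \<le> ennreal 0"
    by (rule tendsto_le[OF trivial_limit_at_top_linorder lim tendsto_const])
       (rule eventually_at_top_linorderI[of 0], rule bnd)
  then show ?thesis by simp
qed

lemma Q0_ge:
  assumes L: "levy_measure \<rho>" and t: "t > 0" and Q: "is_ID_law (scale_measure_real t \<rho>) Q"
    and fin: "emeasure \<rho> {0<..} < \<infinity>"
  shows "ennreal (exp (- t * enn2real (emeasure \<rho> {0<..}))) \<le> emeasure Q {0}"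
proof -
  have PQ: "prob_space Q" and SQ: "sets Q = sets borel" and N: "emeasure Q {..<0} = 0"
    using Q unfolding is_ID_law_def by auto
  have spQ: "space Q = UNIV" using SQ by (metis sets_eq_imp_space_eq space_borel)
  have MQ: "borel_measurable Q = borel_measurable borel" using SQ by (intro measurable_cong_sets) auto
  have AEpos: "AE x in Q. x \<ge> 0"
    by (rule AE_I'[of "{..<0}"]) (auto simp: N SQ)
  define f where "f i x = ennreal (exp (- real i * x))" for i :: nat and x :: real
  have "(\<integral>\<^sup>+ x. (INF i. f i x) \<partial>Q) = (INF i. integral\<^sup>N Q (f i))"
  proof (rule nn_integral_monotone_convergence_INF_AE')
    show "AE x in Q. f (Suc i) x \<le> f i x" for i
      using AEpos by eventually_elim (auto simp: f_def algebra_simps intro!: ennreal_leI)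
    show "f i \<in> borel_measurable Q" for i unfolding f_def MQ by simp
    show "integral\<^sup>N Q (f 0) < \<infinity>"
      using prob_space.emeasure_space_1[OF PQ] unfolding f_def by simp
  qed
  moreover have "(\<integral>\<^sup>+ x. (INF i. f i x) \<partial>Q) = (\<integral>\<^sup>+ x. indicator {0} x \<partial>Q)"
  proof (rule nn_integral_cong_AE)
    show "AE x in Q. (INF i. f i x) = indicator {0} x"
      using AEpos
    proof eventually_elim
      case (elim x)
      show ?case
      proof (cases "x = 0")
        case True then show ?thesis by (simp add: f_def)
      next
        case False
        with elim have x: "x > 0" by simp
        have "(\<lambda>i. exp (- real i * x)) \<longlonglongrightarrow> 0" using x by real_asymp
        then have "(\<lambda>i. f i x) \<longlonglongrightarrow> ennreal 0" unfolding f_def by (rule tendsto_ennrealI)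
        moreover have "(\<lambda>i. f i x) \<longlonglongrightarrow> (INF i. f i x)"
          using x by (intro LIMSEQ_INF) (auto simp: decseq_def f_def intro!: ennreal_leI mult_right_mono)
        ultimately have "(INF i. f i x) = 0" using LIMSEQ_unique by fastforce
        then show ?thesis using False by simp
      qed
    qed
  qed
  moreover have "(\<integral>\<^sup>+ x. indicator {0} x \<partial>Q) = emeasure Q {0}"
    by (simp add: nn_integral_indicator SQ)
  moreover have "ennreal (exp (- t * enn2real (emeasure \<rho> {0<..}))) \<le> integral\<^sup>N Q (f i)" for i
  proof -
    have "enn2real (Ipsi \<rho> (real i)) \<le> enn2real (emeasure \<rho> {0<..})"
      by (rule enn2real_mono[OF Ipsi_le[OF L]]) (use fin in simp)
    then have "exp (- t * enn2real (emeasure \<rho> {0<..})) \<le> exp (- t * enn2real (Ipsi \<rho> (real i)))"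
      using t by simp
    then have "ennreal (exp (- t * enn2real (emeasure \<rho> {0<..}))) \<le> ennreal (exp (- t * enn2real (Ipsi \<rho> (real i))))"
      by (rule ennreal_leI)
    also have "\<dots> = integral\<^sup>N Q (f i)" unfolding f_def using Q_lap[OF L t Q, of "real i"] by simp
    finally show ?thesis .
  qed
  ultimately show ?thesis by (metis le_INF_iff)
qed

lemma Q_split:
  assumes Q: "is_ID_law R Q"
  shows "emeasure Q {0<..} + emeasure Q {0} = 1"
proof -
  have PQ: "prob_space Q" and SQ: "sets Q = sets borel" and N: "emeasure Q {..<0} = 0"
    using Q unfolding is_ID_law_def by auto
  have spQ: "space Q = UNIV" using SQ by (metis sets_eq_imp_space_eq space_borel)
  have "emeasure Q {0<..} + emeasure Q {0} + emeasure Q {..<0} = emeasure Q ({0<..} \<union> {0} \<union> {..<0})"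
    by (subst plus_emeasure, simp_all add: SQ)+ auto
  also have "{0<..} \<union> {0} \<union> {..<0::real} = space Q" using spQ by auto
  also have "emeasure Q (space Q) = 1" using prob_space.emeasure_space_1[OF PQ] .
  finally show ?thesis using N by simp
qed

theorem mainTheorem4:
  fixes \<rho>0 \<rho> :: "real measure" and Q :: "real \<Rightarrow> real measure"
  assumes "levy_measure \<rho>0" and "levy_measure \<rho>"
    and "\<And>t. t > 0 \<Longrightarrow> is_ID_law (scale_measure_real t \<rho>) (Q t)"
  shows "marginal_levy \<rho>0 Q {0<..} = \<infinity> \<longleftrightarrow>
         emeasure \<rho>0 {0<..} = \<infinity> \<and> emeasure \<rho> {0<..} = \<infinity>"
proof (cases "emeasure \<rho> {0<..} = \<infinity>")
  case True
  have "marginal_levy \<rho>0 Q {0<..} = (\<integral>\<^sup>+ t. indicator {0<..} t \<partial>\<rho>0)"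
    unfolding marginal_levy_def
  proof (rule nn_integral_cong)
    fix t assume "t \<in> space \<rho>0"
    show "emeasure (Q t) {0<..} * indicator {0<..} t = indicator {0<..} t"
    proof (cases "t > 0")
      case tp: True
      have "emeasure (Q t) {0} = 0" by (rule Q0_zero[OF assms(2) tp assms(3)[OF tp] True])
      then have "emeasure (Q t) {0<..} = 1" using Q_split[OF assms(3)[OF tp]] by simp
      then show ?thesis by simp
    qed simp
  qed
  also have "\<dots> = emeasure \<rho>0 {0<..}"
    using levy_meas[OF assms(1)] by (simp add: nn_integral_indicator)
  finally show ?thesis using True by simp
next
  case False
  then have fin: "emeasure \<rho> {0<..} < \<infinity>" by (simp add: less_top)
  define c where "c = enn2real (emeasure \<rho> {0<..})"
  have c: "c \<ge> 0" by (simp add: c_def)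
  note M0 = levy_meas[OF assms(1)]
  have "marginal_levy \<rho>0 Q {0<..} \<le>
     (\<integral>\<^sup>+ t. ennreal c * (ennreal t * indicator {0<..<2} t) + indicator {1<..} t \<partial>\<rho>0)"
    unfolding marginal_levy_def
  proof (rule nn_integral_mono)
    fix t assume "t \<in> space \<rho>0"
    show "emeasure (Q t) {0<..} * indicator {0<..} t \<le> ennreal c * (ennreal t * indicator {0<..<2} t) + indicator {1<..} t"
    proof (cases "t > 0")
      case tp: True
      note Qt = assms(3)[OF tp]
      have PQ: "prob_space (Q t)" using Qt unfolding is_ID_law_def by auto
      have lo: "ennreal (exp (- t * c)) \<le> emeasure (Q t) {0}"
        using Q0_ge[OF assms(2) tp Qt fin] by (simp add: c_def)
      have sp: "emeasure (Q t) {0<..} + emeasure (Q t) {0} = 1" by (rule Q_split[OF Qt])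
      have "measure (Q t) {0<..} + measure (Q t) {0} = 1"
        using sp by (simp add: finite_measure.emeasure_eq_measure[OF prob_space.finite_measure[OF PQ]] ennreal_plus[symmetric] del: ennreal_plus)
      moreover have "exp (- t * c) \<le> measure (Q t) {0}"
        using lo by (simp add: finite_measure.emeasure_eq_measure[OF prob_space.finite_measure[OF PQ]])
      ultimately have "measure (Q t) {0<..} \<le> 1 - exp (- c * t)" by (simp add: mult.commute)
      then have "emeasure (Q t) {0<..} \<le> ennreal (1 - exp (- c * t))"
        by (simp add: finite_measure.emeasure_eq_measure[OF prob_space.finite_measure[OF PQ]] ennreal_leI)
      also have "\<dots> \<le> ennreal c * (ennreal t * indicator {0<..<2} t) + indicator {1<..} t"
        by (rule min_bound[OF tp c])
      finally show ?thesis using tp by simp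
    qed simp
  qed
  also have "\<dots> = ennreal c * (\<integral>\<^sup>+ s. ennreal s * indicator {0<..<2} s \<partial>\<rho>0) + emeasure \<rho>0 {1<..}"
    by (subst nn_integral_add) (auto simp: M0 nn_integral_cmult)
  also have "\<dots> < \<infinity>"
  proof -
    have a: "(\<integral>\<^sup>+ s. ennreal s * indicator {0<..<2} s \<partial>\<rho>0) < \<infinity>" and b: "emeasure \<rho>0 {1<..} < \<infinity>"
      using assms(1) unfolding levy_measure_def by auto
    show ?thesis using a b by (simp add: ennreal_mult_less_top)
  qed
  finally show ?thesis using False by simp
qed

end
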